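(* For every $k\ge1$ and every $n\ge1$, the families $\mathrm{SLT}_k$ and $\mathrm{RL}_n^P$ are incomparable (neither is contained in the other).
   Context: Strictly locally testable languages: let $V$ be an alphabet and $k\ge1$. For $B,I,E\subseteq V^k$ and $F\subseteq V^{\le k-1}$, $\mathrm{slt}(B,I,E,F)$ is the language over $V$ consisting of all words in $F$ together with all words $a_1\cdots a_n$ ($a_i\in V$, $n\ge k$) with $a_1\cdots a_k\in B$, $a_{j+1}\cdots a_{j+k}\in I$ for all $1\le j\le n-k-1$, and $a_{n-k+1}\cdots a_n\in E$. $\mathrm{SLT}_k$ is the family of languages of this form. A right-linear grammar is $G=(N,T,P,S)$ with rules $A\to wB$ or $A\to w$ ($A,B\in N$, $w\in T^*$). For a regular language $L$, $\mathrm{Prod}_{RL}(L)$ is the minimum of $|P|$ over all right-linear grammars generating $L$; $\mathrm{RL}_n^P=\{L\text{ regular}:\mathrm{Prod}_{RL}(L)\le n\}$. *)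

theory Defs
  imports Main
begin

type_synonym word = "nat list"
type_synonym lang = "word set"

text \<open>Strictly locally testable language slt(B,I,E,F) over alphabet V with window length k.
Positions are 0-based: the factor a_{j+1}..a_{j+k} is take k (drop j w).\<close>

definition slt :: "nat set \<Rightarrow> nat \<Rightarrow> word set \<Rightarrow> word set \<Rightarrow> word set \<Rightarrow> word set \<Rightarrow> lang" where
  "slt V k B I E F = F \<union>
     {w. set w \<subseteq> V \<and> length w \<ge> k \<and> take k w \<in> B
         \<and> (\<forall>j. 1 \<le> j \<and> j \<le> length w - k - 1 \<longrightarrow> take k (drop j w) \<in> I)
         \<and> drop (length w - k) w \<in> E}"

definition SLT :: "nat \<Rightarrow> lang set" where
  "SLT k = {L. \<exists>V B I E F. finite V
        \<and> B \<subseteq> {w. set w \<subseteq> V \<and> length w = k}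
        \<and> I \<subseteq> {w. set w \<subseteq> V \<and> length w = k}
        \<and> E \<subseteq> {w. set w \<subseteq> V \<and> length w = k}
        \<and> F \<subseteq> {w. set w \<subseteq> V \<and> length w \<le> k - 1}
        \<and> L = slt V k B I E F}"

text \<open>Right-linear grammars G = (N,T,P,S). Nonterminals are natural numbers.
A rule (A, w, Some B) stands for A \<rightarrow> wB, a rule (A, w, None) for A \<rightarrow> w.\<close>

type_synonym rule = "nat \<times> word \<times> nat option"

record rlgrammar =
  nonterms :: "nat set"
  terms :: "nat set"
  prods :: "rule set"
  start :: nat

definition rl_wf :: "rlgrammar \<Rightarrow> bool" where
  "rl_wf G \<longleftrightarrow> finite (nonterms G) \<and> finite (terms G) \<and> finite (prods G)
     \<and> start G \<in> nonterms G
     \<and> (\<forall>(A, w, r) \<in> prods G. A \<in> nonterms G \<and> set w \<subseteq> terms G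
           \<and> (\<forall>B. r = Some B \<longrightarrow> B \<in> nonterms G))"

inductive derives :: "rule set \<Rightarrow> nat \<Rightarrow> word \<Rightarrow> bool" for P where
  term_rule: "(A, w, None) \<in> P \<Longrightarrow> derives P A w"
| cont_rule: "(A, u, Some B) \<in> P \<Longrightarrow> derives P B v \<Longrightarrow> derives P A (u @ v)"

definition rl_lang :: "rlgrammar \<Rightarrow> lang" where
  "rl_lang G = {w. derives (prods G) (start G) w}"

definition regular :: "lang \<Rightarrow> bool" where
  "regular L \<longleftrightarrow> (\<exists>G. rl_wf G \<and> rl_lang G = L)"

definition Prod_RL :: "lang \<Rightarrow> nat" where
  "Prod_RL L = (LEAST m. \<exists>G. rl_wf G \<and> rl_lang G = L \<and> card (prods G) = m)"

definition RL_P :: "nat \<Rightarrow> lang set" where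
  "RL_P n = {L. regular L \<and> Prod_RL L \<le> n}"

end

theory Submission
  imports Defs
begin

lemma derives_factor:
  assumes "derives P A w" "a \<in> set w"
  shows "\<exists>B u r x y. (B, u, r) \<in> P \<and> a \<in> set u \<and> w = x @ u @ y"
  using assms
proof (induction rule: derives.induct)
  case (term_rule A w)
  then show ?case by (metis append_Nil append_Nil2)
next
  case (cont_rule A u B v)
  show ?case
  proof (cases "a \<in> set u")
    case True
    then show ?thesis using cont_rule(1) by (metis append_Nil)
  next
    case False
    then have "a \<in> set v" using cont_rule(4) by simp
    then obtain B' u' r x y where "(B', u', r) \<in> P" "a \<in> set u'" "v = x @ u' @ y"
      using cont_rule(3) by blast
    then show ?thesis by (rule_tac x=B' in exI, rule_tac x=u' in exI, rule_tac x=r in exI,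
        rule_tac x="u @ x" in exI, rule_tac x=y in exI) simp
  qed
qed

lemma part1:
  assumes "k \<ge> 1"
  shows "\<not> SLT k \<subseteq> RL_P n"
proof
  assume H: "SLT k \<subseteq> RL_P n"
  define V where "V = {0..n}"
  define B where "B = {replicate k a | a. a \<in> V}"
  define L where "L = slt V k B {} B {}"
  have "L \<in> SLT k" unfolding SLT_def L_def
    apply (rule CollectI)
    apply (rule exI[of _ V], rule exI[of _ B], rule exI[of _ "{}"], rule exI[of _ B], rule exI[of _ "{}"])
    by (auto simp: V_def B_def)
  then have "L \<in> RL_P n" using H by blast
  then have reg: "regular L" and le: "Prod_RL L \<le> n" by (auto simp: RL_P_def)
  from reg obtain G0 where "rl_wf G0 \<and> rl_lang G0 = L \<and> card (prods G0) = card (prods G0)"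
    unfolding regular_def by blast
  then have ex: "\<exists>m G. rl_wf G \<and> rl_lang G = L \<and> card (prods G) = m" by blast
  have "\<exists>G. rl_wf G \<and> rl_lang G = L \<and> card (prods G) = Prod_RL L"
    unfolding Prod_RL_def using LeastI_ex[OF ex] .
  then obtain G where wf: "rl_wf G" and lang: "rl_lang G = L" and cd: "card (prods G) = Prod_RL L"
    by blast
  have mem: "replicate k a \<in> L" if "a \<in> V" for a
    using that by (auto simp: L_def slt_def B_def)
  have ex_r: "\<exists>r. r \<in> prods G \<and> set (fst (snd r)) = {a}" if "a \<in> V" for a
  proof -
    have d: "derives (prods G) (start G) (replicate k a)"
      using mem[OF that] lang by (auto simp: rl_lang_def)
    have "a \<in> set (replicate k a)" using assms by simp
    from derives_factor[OF d this] obtain B' u r x y where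
      "(B', u, r) \<in> prods G" "a \<in> set u" "replicate k a = x @ u @ y" by blast
    moreover have "set u \<subseteq> {a}"
      using \<open>replicate k a = x @ u @ y\<close>
    proof -
      have "set u \<subseteq> set (replicate k a)" unfolding \<open>replicate k a = x @ u @ y\<close> by auto
      also have "\<dots> \<subseteq> {a}" by (simp add: set_replicate_conv_if)
      finally show ?thesis .
    qed
    ultimately show ?thesis by (rule_tac x="(B',u,r)" in exI) auto
  qed
  define f where "f a = (SOME r. r \<in> prods G \<and> set (fst (snd r)) = {a})" for a
  have fp: "f a \<in> prods G \<and> set (fst (snd (f a))) = {a}" if "a \<in> V" for a
    unfolding f_def using someI_ex[OF ex_r[OF that]] .
  have "inj_on f V"
    by (rule inj_onI) (metis fp singleton_inject)
  moreover have "f ` V \<subseteq> prods G" using fp by blast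
  moreover have "finite (prods G)" using wf by (simp add: rl_wf_def)
  ultimately have "card V \<le> card (prods G)" by (metis card_inj_on_le)
  then show False using cd le by (simp add: V_def)
qed

lemma part2:
  assumes "n \<ge> 1"
  shows "\<not> RL_P n \<subseteq> SLT k"
proof
  assume H: "RL_P n \<subseteq> SLT k"
  define w where "w = replicate (Suc k) (0::nat)"
  define G where "G = \<lparr>nonterms = {0::nat}, terms = {0::nat}, prods = {(0, w, None)}, start = 0\<rparr>"
  have wf: "rl_wf G" by (auto simp: rl_wf_def G_def w_def)
  have der: "derives {(0, w, None)} A v \<Longrightarrow> v = w" for A v
    by (induction rule: derives.induct) auto
  have lang: "rl_lang G = {w}"
    by (auto simp: rl_lang_def G_def dest: der intro: derives.term_rule)
  have reg: "regular {w}" unfolding regular_def using wf lang by blast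
  have "Prod_RL {w} \<le> 1" unfolding Prod_RL_def
    by (rule Least_le) (rule exI[of _ G], intro conjI wf lang, simp add: G_def)
  then have "{w} \<in> RL_P n" using reg assms by (auto simp: RL_P_def)
  then have "{w} \<in> SLT k" using H by blast
  then have "\<exists>V B I E F. finite V
        \<and> B \<subseteq> {w. set w \<subseteq> V \<and> length w = k}
        \<and> I \<subseteq> {w. set w \<subseteq> V \<and> length w = k}
        \<and> E \<subseteq> {w. set w \<subseteq> V \<and> length w = k}
        \<and> F \<subseteq> {w. set w \<subseteq> V \<and> length w \<le> k - 1}
        \<and> {w} = slt V k B I E F" unfolding SLT_def mem_Collect_eq .
  then obtain V B I E F where c: "finite V
        \<and> B \<subseteq> {w. set w \<subseteq> V \<and> length w = k}
        \<and> I \<subseteq> {w. set w \<subseteq> V \<and> length w = k}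
        \<and> E \<subseteq> {w. set w \<subseteq> V \<and> length w = k}
        \<and> F \<subseteq> {w. set w \<subseteq> V \<and> length w \<le> k - 1}
        \<and> {w} = slt V k B I E F" by iprover
  have Fs: "F \<subseteq> {w. set w \<subseteq> V \<and> length w \<le> k - 1}" using c by (elim conjE)
  have eq: "{w} = slt V k B I E F" using c by (elim conjE)
  have "w \<in> slt V k B I E F" using eq by blast
  moreover have "w \<notin> F" using Fs by (auto simp: w_def)
  ultimately have w1: "set w \<subseteq> V" "take k w \<in> B" "drop (length w - k) w \<in> E"
    by (auto simp: slt_def)
  have tk: "take k w = replicate k 0"
    unfolding w_def by (simp add: take_replicate del: replicate_Suc)
  have dk: "drop (length w - k) w = replicate k 0"
    unfolding w_def by (simp add: del: replicate_Suc)
  have sw: "set (replicate k (0::nat)) \<subseteq> V" using w1(1) by (auto simp: w_def)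
  have "replicate k 0 \<in> slt V k B I E F"
    using sw w1 tk dk unfolding slt_def by simp
  then have "replicate k 0 = w" using eq by blast
  then show False by (simp add: w_def)
qed

theorem mainTheorem10:
  fixes k n :: nat
  assumes "k \<ge> 1" and "n \<ge> 1"
  shows "\<not> SLT k \<subseteq> RL_P n \<and> \<not> RL_P n \<subseteq> SLT k"
  using part1[OF assms(1)] part2[OF assms(2)] by (rule conjI)

end
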